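(* In a goal-conditioned MDP with deterministic transition dynamics, the policy that minimizes the Wasserstein distance $W_1^\pi(\rho_\pi,\rho_g)=\sum_{s\in\mathcal{S}}\rho_\pi(s\mid s_g)\,d^\pi_T(s,s_g)$ over the time-step metric is the optimal (expected-return-maximizing) policy.
   Context: A goal-conditioned MDP has discrete state space $\mathcal{S}$, discrete actions $\mathcal{A}$, goal-dependent transitions $P(\cdot\mid s,a,s_g)$ (deterministic here: each is a point mass), start-state distribution $\rho_0$, and discount $\gamma\in[0,1)$; the reward is $\mathbb{I}[s_{t+1}=s_g]$ and after reaching the goal $s_g$ the process enters an absorbing zero-reward state. The optimal policy maximizes expected discounted return. For a policy $\pi$, $T(s_g\mid\pi,s)$ is the first time-step at which $s_g$ is encountered starting from $s$ following $\pi$, and $d^\pi_T(s,s_g):=\mathbb{E}[T(s_g\mid\pi,s)]$ is the time-step quasimetric. The goal-conditioned state visitation distribution is $\rho_\pi(s\mid s_g)=\mathbb{E}_{s_0\sim\rho_0}\big[(1-\gamma)\sum_{t=0}^\infty\gamma^tP(s_t=s\mid\pi,s_g)\big]$ and $\rho_g=\delta(s_g)$. *)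

theory Defs
  imports "HOL-Probability.Probability"
begin

text \<open>The process lives on 's option: Some s is an ordinary state, None is the
  absorbing zero-reward state entered right after the goal is reached.\<close>

definition gc_step ::
  "('s \<Rightarrow> 'a \<Rightarrow> 's \<Rightarrow> 's pmf) \<Rightarrow> ('s \<Rightarrow> 's \<Rightarrow> 'a pmf) \<Rightarrow> 's \<Rightarrow> 's option \<Rightarrow> 's option pmf" where
  "gc_step P pol g x = (case x of
      None \<Rightarrow> return_pmf None
    | Some s \<Rightarrow> (if s = g then return_pmf None
                else bind_pmf (pol s g) (\<lambda>a. map_pmf Some (P s a g))))"

definition state_dist ::
  "('s \<Rightarrow> 'a \<Rightarrow> 's \<Rightarrow> 's pmf) \<Rightarrow> ('s \<Rightarrow> 's \<Rightarrow> 'a pmf) \<Rightarrow> 's \<Rightarrow> 's pmf \<Rightarrow> nat \<Rightarrow> 's option pmf" where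
  "state_dist P pol g mu t = ((\<lambda>m. bind_pmf m (gc_step P pol g)) ^^ t) (map_pmf Some mu)"

text \<open>Time-step quasimetric d_T(s, sg) = E[T(sg | pol, s)], with T the first time step at which
  the goal is encountered (T = \<infinity> if never). Since the goal is visited at most once,
  P(T = n) = P(s_n = sg). The expectation of the extended-natural random variable T is
  sum_n n P(T = n) + \<infinity> * P(T = \<infinity>).\<close>
definition hit_time_exp ::
  "('s \<Rightarrow> 'a \<Rightarrow> 's \<Rightarrow> 's pmf) \<Rightarrow> ('s \<Rightarrow> 's \<Rightarrow> 'a pmf) \<Rightarrow> 's \<Rightarrow> 's \<Rightarrow> ennreal" where
  "hit_time_exp P pol s g =
     (\<Sum>n. ennreal (real n) * ennreal (pmf (state_dist P pol g (return_pmf s) n) (Some g)))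
     + \<infinity> * (1 - (\<Sum>n. ennreal (pmf (state_dist P pol g (return_pmf s) n) (Some g))))"

definition visitation ::
  "('s \<Rightarrow> 'a \<Rightarrow> 's \<Rightarrow> 's pmf) \<Rightarrow> ('s \<Rightarrow> 's \<Rightarrow> 'a pmf) \<Rightarrow> 's \<Rightarrow> 's pmf \<Rightarrow> real \<Rightarrow> 's \<Rightarrow> ennreal" where
  "visitation P pol g rho0 \<gamma> s =
     ennreal (1 - \<gamma>) * (\<Sum>t. ennreal (\<gamma> ^ t * pmf (state_dist P pol g rho0 t) (Some s)))"

definition wasserstein_obj ::
  "('s \<Rightarrow> 'a \<Rightarrow> 's \<Rightarrow> 's pmf) \<Rightarrow> ('s \<Rightarrow> 's \<Rightarrow> 'a pmf) \<Rightarrow> 's \<Rightarrow> 's pmf \<Rightarrow> real \<Rightarrow> ennreal" where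
  "wasserstein_obj P pol g rho0 \<gamma> =
     (\<integral>\<^sup>+ s. visitation P pol g rho0 \<gamma> s * hit_time_exp P pol s g \<partial>count_space UNIV)"

text \<open>Expected discounted return with reward I[s_{t+1} = sg] (zero after absorption).\<close>
definition expected_return ::
  "('s \<Rightarrow> 'a \<Rightarrow> 's \<Rightarrow> 's pmf) \<Rightarrow> ('s \<Rightarrow> 's \<Rightarrow> 'a pmf) \<Rightarrow> 's \<Rightarrow> 's pmf \<Rightarrow> real \<Rightarrow> real" where
  "expected_return P pol g rho0 \<gamma> =
     (\<Sum>t. \<gamma> ^ t * pmf (state_dist P pol g rho0 (Suc t)) (Some g))"

end

theory Submission
  imports Defs
begin

lemma sd_0: "state_dist P pol g mu 0 = map_pmf Some mu"
  by (simp add: state_dist_def)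

lemma sd_Suc: "state_dist P pol g mu (Suc t) = bind_pmf (state_dist P pol g mu t) (gc_step P pol g)"
  by (simp add: state_dist_def)

lemma sd_bind: "state_dist P pol g mu t = bind_pmf mu (\<lambda>s. state_dist P pol g (return_pmf s) t)"
proof (induction t)
  case 0
  then show ?case by (simp add: sd_0 map_pmf_def bind_return_pmf)
next
  case (Suc t)
  then show ?case by (simp add: sd_Suc bind_assoc_pmf)
qed

lemma gc_step_None: "pmf (gc_step P pol g x) None = (if x = None \<or> x = Some g then 1 else 0)"
proof (cases x)
  case None then show ?thesis by (simp add: gc_step_def)
next
  case (Some s)
  show ?thesis
  proof (cases "s = g")
    case True then show ?thesis using Some by (simp add: gc_step_def)
  next
    case False
    have "None \<notin> set_pmf (gc_step P pol g x)" using Some False by (auto simp: gc_step_def)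
    then show ?thesis using Some False by (simp add: pmf_eq_0_set_pmf)
  qed
qed

lemma bind_None: "pmf (bind_pmf m (gc_step P pol g)) None = pmf m None + pmf m (Some g)"
proof -
  have "pmf (bind_pmf m (gc_step P pol g)) None = (\<integral>x. indicator {None, Some g} x \<partial>measure_pmf m)"
    unfolding pmf_bind by (intro Bochner_Integration.integral_cong) (auto simp: gc_step_None)
  also have "\<dots> = measure (measure_pmf m) {None, Some g}" by simp
  also have "\<dots> = pmf m None + pmf m (Some g)"
    by (subst measure_measure_pmf_finite) auto
  finally show ?thesis .
qed

lemma sd_None: "pmf (state_dist P pol g mu N) None = (\<Sum>n<N. pmf (state_dist P pol g mu n) (Some g))"
proof (induction N)
  case 0
  have "None \<notin> set_pmf (map_pmf Some mu)" by auto
  then show ?case by (simp add: sd_0 pmf_eq_0_set_pmf)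
next
  case (Suc N)
  then show ?case by (simp add: sd_Suc bind_None)
qed

lemma hit_sum_le1: "(\<Sum>n. ennreal (pmf (state_dist P pol g mu n) (Some g))) \<le> 1"
proof (rule suminf_le_const)
  show "summable (\<lambda>n. ennreal (pmf (state_dist P pol g mu n) (Some g)))" by simp
  fix N
  have "(\<Sum>n<N. ennreal (pmf (state_dist P pol g mu n) (Some g))) = ennreal (pmf (state_dist P pol g mu N) None)"
    by (simp add: sd_None sum_ennreal)
  also have "\<dots> \<le> 1" by (simp add: pmf_le_1)
  finally show "(\<Sum>n<N. ennreal (pmf (state_dist P pol g mu n) (Some g))) \<le> 1" .
qed

fun hits :: "('s \<Rightarrow> 'a \<Rightarrow> 's \<Rightarrow> 's pmf) \<Rightarrow> 's \<Rightarrow> nat \<Rightarrow> 's \<Rightarrow> bool" where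
  "hits P g 0 s = (s = g)"
| "hits P g (Suc n) s = (s \<noteq> g \<and> (\<exists>a s'. P s a g = return_pmf s' \<and> hits P g n s'))"

definition "Rch P g s = (\<exists>n. hits P g n s)"
definition "Dst P g s = (LEAST n. hits P g n s)"

lemma Rch_hits: "Rch P g s \<Longrightarrow> hits P g (Dst P g s) s"
  unfolding Rch_def Dst_def by (metis LeastI)

lemma hits_Dst: "hits P g n s \<Longrightarrow> Rch P g s \<and> Dst P g s \<le> n"
  unfolding Rch_def Dst_def by (metis Least_le)

lemma Rch_g: "Rch P g g" "Dst P g g = 0"
  using hits_Dst[of P g 0 g] by auto

lemma Dst0: "Rch P g s \<Longrightarrow> Dst P g s = 0 \<Longrightarrow> s = g"
  using Rch_hits[of P g s] by simp

lemma Rch_step: "s \<noteq> g \<Longrightarrow> P s a g = return_pmf s' \<Longrightarrow> Rch P g s' \<Longrightarrow> Rch P g s \<and> Dst P g s \<le> Suc (Dst P g s')"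
  using Rch_hits[of P g s'] hits_Dst[of P g "Suc (Dst P g s')" s] by auto

lemma Rch_best: assumes "Rch P g s" "s \<noteq> g"
  shows "\<exists>a s'. P s a g = return_pmf s' \<and> Rch P g s' \<and> Suc (Dst P g s') = Dst P g s"
proof -
  have "Dst P g s \<noteq> 0" using Dst0[OF assms(1)] assms(2) by auto
  then obtain m where m: "Dst P g s = Suc m" using not0_implies_Suc by blast
  with Rch_hits[OF assms(1)] obtain a s' where as: "P s a g = return_pmf s'" "hits P g m s'" by auto
  have h1: "Rch P g s'" "Dst P g s' \<le> m" using hits_Dst[OF as(2)] by auto
  have "Dst P g s \<le> Suc (Dst P g s')" using Rch_step[of s g P a s'] assms(2) as(1) h1(1) by blast
  then have "Suc (Dst P g s') = Dst P g s" using m h1(2) by linarith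
  then show ?thesis using as(1) h1(1) by blast
qed

definition Inv :: "('s \<Rightarrow> 'a \<Rightarrow> 's \<Rightarrow> 's pmf) \<Rightarrow> 's \<Rightarrow> 's \<Rightarrow> nat \<Rightarrow> 's option \<Rightarrow> bool" where
  "Inv P g s0 t x = (case x of None \<Rightarrow> Rch P g s0 \<and> Dst P g s0 < t
     | Some s \<Rightarrow> (Rch P g s \<longrightarrow> Rch P g s0 \<and> Dst P g s0 \<le> Dst P g s + t))"

lemma set_gc_step: assumes det: "\<forall>s a sg. \<exists>s'. P s a sg = return_pmf s'"
  and y: "y \<in> set_pmf (gc_step P pol g x)"
  shows "(y = None \<and> (x = None \<or> x = Some g)) \<or> (\<exists>s a s'. x = Some s \<and> s \<noteq> g \<and> P s a g = return_pmf s' \<and> y = Some s')"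
proof (cases x)
  case None then show ?thesis using y by (simp add: gc_step_def)
next
  case (Some s)
  show ?thesis
  proof (cases "s = g")
    case True then show ?thesis using Some y by (simp add: gc_step_def)
  next
    case False
    have eq: "gc_step P pol g x = bind_pmf (pol s g) (\<lambda>a. map_pmf Some (P s a g))"
      using Some False unfolding gc_step_def by simp
    have "y \<in> set_pmf (bind_pmf (pol s g) (\<lambda>a. map_pmf Some (P s a g)))"
      using y unfolding eq .
    then obtain a where a: "y \<in> set_pmf (map_pmf Some (P s a g))" unfolding set_bind_pmf by blast
    obtain s'' where s'': "P s a g = return_pmf s''" using det by blast
    have "y = Some s''" using a unfolding s'' by simp
    then show ?thesis using Some False s'' by blast
  qed
qed

lemma Inv_sd: assumes det: "\<forall>s a sg. \<exists>s'. P s a sg = return_pmf s'"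
  shows "\<forall>x\<in>set_pmf (state_dist P pol g (return_pmf s0) t). Inv P g s0 t x"
proof (induction t)
  case 0
  show ?case by (simp add: sd_0 Inv_def)
next
  case (Suc t)
  show ?case
  proof
    fix x assume "x \<in> set_pmf (state_dist P pol g (return_pmf s0) (Suc t))"
    then obtain y where y: "y \<in> set_pmf (state_dist P pol g (return_pmf s0) t)" "x \<in> set_pmf (gc_step P pol g y)"
      by (auto simp: sd_Suc)
    have I: "Inv P g s0 t y" using Suc.IH y(1) by blast
    have "(x = None \<and> (y = None \<or> y = Some g)) \<or> (\<exists>s a s'. y = Some s \<and> s \<noteq> g \<and> P s a g = return_pmf s' \<and> x = Some s')"
      using set_gc_step[OF det y(2)] .
    then show "Inv P g s0 (Suc t) x"
    proof
      assume "x = None \<and> (y = None \<or> y = Some g)"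
      then show ?thesis
      proof (elim conjE disjE)
        assume "x = None" "y = None"
        then show ?thesis using I by (simp add: Inv_def)
      next
        assume "x = None" "y = Some g"
        then show ?thesis using I Rch_g[of P g] by (simp add: Inv_def)
      qed
    next
      assume "\<exists>s a s'. y = Some s \<and> s \<noteq> g \<and> P s a g = return_pmf s' \<and> x = Some s'"
      then obtain s a s' where h: "y = Some s" "s \<noteq> g" "P s a g = return_pmf s'" "x = Some s'" by blast
      have I': "Rch P g s \<longrightarrow> Rch P g s0 \<and> Dst P g s0 \<le> Dst P g s + t" using I h(1) by (simp add: Inv_def)
      have "Rch P g s' \<longrightarrow> Rch P g s0 \<and> Dst P g s0 \<le> Dst P g s' + Suc t"
      proof
        assume "Rch P g s'"
        then have "Rch P g s \<and> Dst P g s \<le> Suc (Dst P g s')" using Rch_step[of s g P a s'] h(2,3) by blast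
        then show "Rch P g s0 \<and> Dst P g s0 \<le> Dst P g s' + Suc t" using I' by auto
      qed
      then show ?thesis using h(4) by (simp add: Inv_def)
    qed
  qed
qed

lemma summ_enn: "summable (f :: nat \<Rightarrow> ennreal)" by (rule summableI)

lemma hit_pos: assumes det: "\<forall>s a sg. \<exists>s'. P s a sg = return_pmf s'"
  and "pmf (state_dist P pol g (return_pmf z) n) (Some g) \<noteq> 0"
  shows "Rch P g z \<and> Dst P g z \<le> n"
proof -
  have "Some g \<in> set_pmf (state_dist P pol g (return_pmf z) n)" using assms(2) by (simp add: set_pmf_iff)
  then have "Inv P g z n (Some g)" using Inv_sd[OF det] by blast
  then show ?thesis using Rch_g[of P g] by (simp add: Inv_def)
qed

definition Dinf :: "('s \<Rightarrow> 'a \<Rightarrow> 's \<Rightarrow> 's pmf) \<Rightarrow> 's \<Rightarrow> 's \<Rightarrow> ennreal" where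
  "Dinf P g s = (if Rch P g s then of_nat (Dst P g s) else \<infinity>)"

lemma hte_ge: assumes det: "\<forall>s a sg. \<exists>s'. P s a sg = return_pmf s'"
  shows "Dinf P g s \<le> hit_time_exp P pol s g"
proof -
  define p where "p n = ennreal (pmf (state_dist P pol g (return_pmf s) n) (Some g))" for n
  have hte: "hit_time_exp P pol s g = (\<Sum>n. ennreal (real n) * p n) + \<infinity> * (1 - (\<Sum>n. p n))"
    unfolding hit_time_exp_def p_def ..
  show ?thesis
  proof (cases "(\<Sum>n. p n) < 1")
    case True
    then have "\<infinity> * (1 - (\<Sum>n. p n)) = \<infinity>"
      by (simp add: ennreal_top_mult diff_eq_0_iff_ennreal)
    then show ?thesis unfolding hte by simp
  next
    case False
    then have S1: "1 \<le> (\<Sum>n. p n)" by simp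
    have R: "Rch P g s"
    proof (rule ccontr)
      assume "\<not> Rch P g s"
      then have "p n = 0" for n using hit_pos[OF det, where pol=pol and z=s and n=n] unfolding p_def by auto
      then show False using S1 by simp
    qed
    have "of_nat (Dst P g s) * p n \<le> ennreal (real n) * p n" for n
    proof (cases "p n = 0")
      case False
      then have "Dst P g s \<le> n" using hit_pos[OF det, where pol=pol and z=s and n=n] unfolding p_def by auto
      then show ?thesis by (intro mult_right_mono) (auto simp: ennreal_of_nat_eq_real_of_nat)
    qed simp
    then have "(\<Sum>n. of_nat (Dst P g s) * p n) \<le> (\<Sum>n. ennreal (real n) * p n)"
      by (intro suminf_le summ_enn) auto
    moreover have "(\<Sum>n. of_nat (Dst P g s) * p n) = of_nat (Dst P g s) * (\<Sum>n. p n)"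
      by (rule ennreal_suminf_cmult)
    moreover have "of_nat (Dst P g s) \<le> (of_nat (Dst P g s) :: ennreal) * (\<Sum>n. p n)"
      using mult_left_mono[OF S1, of "of_nat (Dst P g s) :: ennreal"] by simp
    ultimately have "of_nat (Dst P g s) \<le> (\<Sum>n. ennreal (real n) * p n)" by simp
    then show ?thesis unfolding hte Dinf_def using R by (simp add: add_increasing2)
  qed
qed

lemma hte_eq: assumes det: "\<forall>s a sg. \<exists>s'. P s a sg = return_pmf s'"
  and R: "Rch P g s" and le: "hit_time_exp P pol s g \<le> of_nat (Dst P g s)"
  shows "pmf (state_dist P pol g (return_pmf s) (Dst P g s)) (Some g) = 1"
proof -
  define k where "k = Dst P g s"
  define p where "p n = ennreal (pmf (state_dist P pol g (return_pmf s) n) (Some g))" for n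
  have hte: "hit_time_exp P pol s g = (\<Sum>n. ennreal (real n) * p n) + \<infinity> * (1 - (\<Sum>n. p n))"
    unfolding hit_time_exp_def p_def ..
  have "\<infinity> * (1 - (\<Sum>n. p n)) \<noteq> \<infinity>"
  proof
    assume "\<infinity> * (1 - (\<Sum>n. p n)) = \<infinity>"
    then have "hit_time_exp P pol s g = \<infinity>" unfolding hte by simp
    then show False using le by (simp add: top_unique)
  qed
  then have "1 - (\<Sum>n. p n) = 0" by (auto simp: ennreal_top_mult split: if_splits)
  then have S1: "1 \<le> (\<Sum>n. p n)" by (simp add: diff_eq_0_iff_ennreal)
  define X where "X = (\<Sum>n. if k < n then p n else 0)"
  have "of_nat k * p n + (if k < n then p n else 0) \<le> ennreal (real n) * p n" for n
  proof (cases "p n = 0")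
    case False
    then have kn: "k \<le> n" using hit_pos[OF det, where pol=pol and z=s and n=n] unfolding p_def k_def by auto
    show ?thesis
    proof (cases "k < n")
      case True
      have "Suc k \<le> n" using True by simp
      then have "real k + 1 \<le> real n" by (metis of_nat_Suc of_nat_le_iff add.commute)
      then have "ennreal (real k + 1) \<le> ennreal (real n)" by (rule ennreal_leI)
      then have kk: "of_nat k + 1 \<le> ennreal (real n)"
        by (simp add: ennreal_plus ennreal_of_nat_eq_real_of_nat)
      have "of_nat k * p n + p n = (of_nat k + 1) * p n" by (simp add: distrib_right)
      also have "\<dots> \<le> ennreal (real n) * p n"
        using kk by (intro mult_right_mono) auto
      finally show ?thesis using True by simp
    next
      case False
      then have "n = k" using kn by simp
      then show ?thesis by (simp add: ennreal_of_nat_eq_real_of_nat)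
    qed
  qed simp
  then have c: "(\<Sum>n. of_nat k * p n + (if k < n then p n else 0)) \<le> (\<Sum>n. ennreal (real n) * p n)"
    by (intro suminf_le summ_enn) auto
  have b: "(\<Sum>n. of_nat k * p n + (if k < n then p n else 0)) = of_nat k * (\<Sum>n. p n) + X"
    unfolding X_def by (simp add: suminf_add[symmetric] ennreal_suminf_cmult)
  have a: "of_nat k + X \<le> (of_nat k :: ennreal) * (\<Sum>n. p n) + X"
    using mult_left_mono[OF S1, of "of_nat k :: ennreal"] by (simp add: add_right_mono)
  have d: "(\<Sum>n. ennreal (real n) * p n) \<le> of_nat k"
    using le unfolding hte k_def by (meson add_increasing2 order.trans zero_le le_iff_add)
  have "of_nat k + X \<le> of_nat k + 0" using a b c d by (metis add.right_neutral order.trans)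
  then have X0: "X = 0" by (simp add: ennreal_add_left_cancel_le)
  have pz: "p n = 0" if "k < n" for n
  proof -
    have "(\<Sum>i\<in>{n}. if k < i then p i else 0) \<le> X"
      unfolding X_def by (intro sum_le_suminf summ_enn) auto
    then show ?thesis using X0 that by simp
  qed
  have "(\<Sum>n. p n) = (\<Sum>n. if n = k then p n else 0)"
  proof (rule suminf_cong)
    fix n
    show "p n = (if n = k then p n else 0)"
    proof (cases "n = k")
      case False
      then show ?thesis
      proof (cases "k < n")
        case True then show ?thesis using pz \<open>n \<noteq> k\<close> by simp
      next
        case False
        then have "n < k" using \<open>n \<noteq> k\<close> by simp
        then have "p n = 0" using hit_pos[OF det, where pol=pol and z=s and n=n] unfolding p_def k_def by fastforce
        then show ?thesis using \<open>n \<noteq> k\<close> by simp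
      qed
    qed simp
  qed
  also have "\<dots> = p k" using sums_single[of k p] sums_unique by metis
  finally have "1 \<le> p k" using S1 by simp
  then have "1 \<le> pmf (state_dist P pol g (return_pmf s) k) (Some g)" unfolding p_def by simp
  then show ?thesis using pmf_le_1 k_def by (metis antisym)
qed

lemma opt_int: "(\<integral>\<^sup>+x. case_option 0 f x \<partial>measure_pmf p) = (\<integral>\<^sup>+s. ennreal (pmf p (Some s)) * f s \<partial>count_space UNIV)"
proof -
  define h where "h x = ennreal (pmf p x) * case_option 0 f x" for x
  have "(\<integral>\<^sup>+x. case_option 0 f x \<partial>measure_pmf p) = (\<integral>\<^sup>+x. h x \<partial>count_space UNIV)"
    unfolding h_def by (rule nn_integral_measure_pmf)
  also have "\<dots> = (\<integral>\<^sup>+x. h x * indicator (range Some) x \<partial>count_space UNIV)"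
    by (intro nn_integral_cong) (auto simp: h_def indicator_def split: option.splits)
  also have "\<dots> = (\<integral>\<^sup>+x. h x \<partial>count_space (range Some))"
    by (simp add: nn_integral_count_space_indicator)
  also have "\<dots> = (\<integral>\<^sup>+s. h (Some s) \<partial>count_space UNIV)"
    by (rule nn_integral_bij_count_space[symmetric]) (auto simp: bij_betw_def)
  finally show ?thesis by (simp add: h_def)
qed

lemma visit_expand: assumes "0 \<le> \<gamma>"
  shows "(\<integral>\<^sup>+s. visitation P pol g mu \<gamma> s * f s \<partial>count_space UNIV) =
   ennreal (1-\<gamma>) * (\<Sum>t. ennreal (\<gamma>^t) * (\<integral>\<^sup>+x. case_option 0 f x \<partial>measure_pmf (state_dist P pol g mu t)))"
proof -
  have "(\<integral>\<^sup>+s. visitation P pol g mu \<gamma> s * f s \<partial>count_space UNIV)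
     = (\<integral>\<^sup>+s. ennreal (1-\<gamma>) * (\<Sum>t. ennreal (\<gamma>^t * pmf (state_dist P pol g mu t) (Some s)) * f s) \<partial>count_space UNIV)"
    unfolding visitation_def by (simp add: ennreal_suminf_multc mult.assoc)
  also have "\<dots> = ennreal (1-\<gamma>) * (\<integral>\<^sup>+s. (\<Sum>t. ennreal (\<gamma>^t * pmf (state_dist P pol g mu t) (Some s)) * f s) \<partial>count_space UNIV)"
    by (rule nn_integral_cmult) simp
  also have "(\<integral>\<^sup>+s. (\<Sum>t. ennreal (\<gamma>^t * pmf (state_dist P pol g mu t) (Some s)) * f s) \<partial>count_space UNIV)
      = (\<Sum>t. \<integral>\<^sup>+s. ennreal (\<gamma>^t * pmf (state_dist P pol g mu t) (Some s)) * f s \<partial>count_space UNIV)"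
    by (rule nn_integral_suminf) simp
  also have "\<dots> = (\<Sum>t. ennreal (\<gamma>^t) * (\<integral>\<^sup>+x. case_option 0 f x \<partial>measure_pmf (state_dist P pol g mu t)))"
  proof (rule suminf_cong)
    fix t
    have "(\<integral>\<^sup>+s. ennreal (\<gamma>^t * pmf (state_dist P pol g mu t) (Some s)) * f s \<partial>count_space UNIV)
       = (\<integral>\<^sup>+s. ennreal (\<gamma>^t) * (ennreal (pmf (state_dist P pol g mu t) (Some s)) * f s) \<partial>count_space UNIV)"
      by (intro nn_integral_cong) (simp add: ennreal_mult assms mult.assoc)
    also have "\<dots> = ennreal (\<gamma>^t) * (\<integral>\<^sup>+s. ennreal (pmf (state_dist P pol g mu t) (Some s)) * f s \<partial>count_space UNIV)"
      by (rule nn_integral_cmult) simp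
    finally show "(\<integral>\<^sup>+s. ennreal (\<gamma>^t * pmf (state_dist P pol g mu t) (Some s)) * f s \<partial>count_space UNIV)
      = ennreal (\<gamma>^t) * (\<integral>\<^sup>+x. case_option 0 f x \<partial>measure_pmf (state_dist P pol g mu t))"
      by (simp add: opt_int)
  qed
  finally show ?thesis .
qed

lemma ret_expand: assumes "0 \<le> \<gamma>" "\<gamma> < 1"
  shows "ennreal (expected_return P pol g mu \<gamma>) =
    (\<integral>\<^sup>+z. (\<Sum>t. ennreal (\<gamma>^t * pmf (state_dist P pol g (return_pmf z) (Suc t)) (Some g))) \<partial>measure_pmf mu)"
proof -
  have sm: "summable (\<lambda>t. \<gamma>^t * pmf (state_dist P pol g mu (Suc t)) (Some g))"
  proof (rule summable_comparison_test[where g="\<lambda>t. \<gamma>^t"])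
    show "\<exists>N. \<forall>n\<ge>N. norm (\<gamma>^n * pmf (state_dist P pol g mu (Suc n)) (Some g)) \<le> \<gamma>^n"
      using assms by (auto intro!: exI[of _ 0] mult_left_le pmf_le_1)
    show "summable (\<lambda>t. \<gamma>^t)" using assms by (intro summable_geometric) simp
  qed
  have "ennreal (expected_return P pol g mu \<gamma>) = (\<Sum>t. ennreal (\<gamma>^t * pmf (state_dist P pol g mu (Suc t)) (Some g)))"
    unfolding expected_return_def using sm assms by (subst suminf_ennreal2) auto
  also have "\<dots> = (\<Sum>t. \<integral>\<^sup>+z. ennreal (\<gamma>^t * pmf (state_dist P pol g (return_pmf z) (Suc t)) (Some g)) \<partial>measure_pmf mu)"
  proof (rule suminf_cong)
    fix t
    have "ennreal (\<gamma>^t * pmf (state_dist P pol g mu (Suc t)) (Some g))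
        = ennreal (\<gamma>^t) * ennreal (pmf (state_dist P pol g mu (Suc t)) (Some g))"
      using assms by (simp add: ennreal_mult)
    also have "\<dots> = ennreal (\<gamma>^t) * (\<integral>\<^sup>+z. ennreal (pmf (state_dist P pol g (return_pmf z) (Suc t)) (Some g)) \<partial>measure_pmf mu)"
      by (subst sd_bind) (simp add: ennreal_pmf_bind)
    also have "\<dots> = (\<integral>\<^sup>+z. ennreal (\<gamma>^t) * ennreal (pmf (state_dist P pol g (return_pmf z) (Suc t)) (Some g)) \<partial>measure_pmf mu)"
      by (rule nn_integral_cmult[symmetric]) (simp add: measurable_pmf_measure1)
    also have "\<dots> = (\<integral>\<^sup>+z. ennreal (\<gamma>^t * pmf (state_dist P pol g (return_pmf z) (Suc t)) (Some g)) \<partial>measure_pmf mu)"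
      using assms by (simp add: ennreal_mult)
    finally show "ennreal (\<gamma>^t * pmf (state_dist P pol g mu (Suc t)) (Some g)) = \<dots>" .
  qed
  also have "\<dots> = (\<integral>\<^sup>+z. (\<Sum>t. ennreal (\<gamma>^t * pmf (state_dist P pol g (return_pmf z) (Suc t)) (Some g))) \<partial>measure_pmf mu)"
    by (rule nn_integral_suminf[symmetric]) (simp add: measurable_pmf_measure1)
  finally show ?thesis .
qed

definition asp :: "('s \<Rightarrow> 'a \<Rightarrow> 's \<Rightarrow> 's pmf) \<Rightarrow> 's \<Rightarrow> 's \<Rightarrow> 'a" where
  "asp P g s = (SOME a. \<exists>s'. P s a g = return_pmf s' \<and> Rch P g s' \<and> Suc (Dst P g s') = Dst P g s)"
definition polsp :: "('s \<Rightarrow> 'a \<Rightarrow> 's \<Rightarrow> 's pmf) \<Rightarrow> 's \<Rightarrow> 's \<Rightarrow> 's \<Rightarrow> 'a pmf" where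
  "polsp P g = (\<lambda>s sg. return_pmf (asp P g s))"
definition nxsp :: "('s \<Rightarrow> 'a \<Rightarrow> 's \<Rightarrow> 's pmf) \<Rightarrow> 's \<Rightarrow> 's \<Rightarrow> 's" where
  "nxsp P g s = (SOME s'. P s (asp P g s) g = return_pmf s')"
definition Fsp :: "('s \<Rightarrow> 'a \<Rightarrow> 's \<Rightarrow> 's pmf) \<Rightarrow> 's \<Rightarrow> 's option \<Rightarrow> 's option" where
  "Fsp P g x = (case x of None \<Rightarrow> None | Some s \<Rightarrow> if s = g then None else Some (nxsp P g s))"

lemma nxt_det: assumes det: "\<forall>s a sg. \<exists>s'. P s a sg = return_pmf s'"
  shows "P s (asp P g s) g = return_pmf (nxsp P g s)"
  unfolding nxsp_def using det by (metis (mono_tags, lifting) someI_ex)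

lemma nxt_prop: assumes det: "\<forall>s a sg. \<exists>s'. P s a sg = return_pmf s'"
  and R: "Rch P g s" and ng: "s \<noteq> g"
  shows "Rch P g (nxsp P g s) \<and> Suc (Dst P g (nxsp P g s)) = Dst P g s"
proof -
  obtain s' where s': "P s (asp P g s) g = return_pmf s'" "Rch P g s'" "Suc (Dst P g s') = Dst P g s"
    using someI_ex[OF Rch_best[OF R ng]] unfolding asp_def by blast
  have "return_pmf (nxsp P g s) = return_pmf s'" using nxt_det[OF det, of s g] s'(1) by simp
  then have "nxsp P g s = s'" by simp
  then show ?thesis using s' by simp
qed

lemma gc_sp: assumes det: "\<forall>s a sg. \<exists>s'. P s a sg = return_pmf s'"
  shows "gc_step P (polsp P g) g x = return_pmf (Fsp P g x)"
proof (cases x)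
  case None then show ?thesis by (simp add: gc_step_def Fsp_def)
next
  case (Some s)
  show ?thesis
  proof (cases "s = g")
    case True then show ?thesis using Some by (simp add: gc_step_def Fsp_def)
  next
    case False
    have "gc_step P (polsp P g) g x = bind_pmf (return_pmf (asp P g s)) (\<lambda>a. map_pmf Some (P s a g))"
      using Some False unfolding gc_step_def polsp_def by simp
    also have "\<dots> = map_pmf Some (P s (asp P g s) g)" by (rule bind_return_pmf)
    also have "\<dots> = map_pmf Some (return_pmf (nxsp P g s))" by (simp only: nxt_det[OF det])
    also have "\<dots> = return_pmf (Some (nxsp P g s))" by (rule map_return_pmf)
    finally show ?thesis using Some False by (simp add: Fsp_def)
  qed
qed

lemma sd_sp: assumes det: "\<forall>s a sg. \<exists>s'. P s a sg = return_pmf s'"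
  shows "state_dist P (polsp P g) g mu t = map_pmf (\<lambda>z. (Fsp P g ^^ t) (Some z)) mu"
proof (induction t)
  case 0
  then show ?case by (simp add: sd_0)
next
  case (Suc t)
  then show ?case by (simp add: sd_Suc gc_sp[OF det] bind_map_pmf map_pmf_def bind_assoc_pmf bind_return_pmf)
qed

lemma Fsp_None: "(Fsp P g ^^ n) None = None"
  by (induction n) (simp_all add: Fsp_def)

lemma Fsp_path: assumes det: "\<forall>s a sg. \<exists>s'. P s a sg = return_pmf s'"
  shows "Rch P g s \<Longrightarrow> (n \<le> Dst P g s \<longrightarrow> (\<exists>s'. (Fsp P g ^^ n) (Some s) = Some s' \<and> Rch P g s' \<and> Dst P g s' = Dst P g s - n))
      \<and> (Dst P g s < n \<longrightarrow> (Fsp P g ^^ n) (Some s) = None)"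
proof (induction n arbitrary: s)
  case 0
  then show ?case by simp
next
  case (Suc n)
  show ?case
  proof (cases "s = g")
    case True
    then have "(Fsp P g ^^ Suc n) (Some s) = None" by (simp add: funpow_Suc_right Fsp_def Fsp_None del: funpow.simps)
    then show ?thesis using True Rch_g[of P g] by simp
  next
    case False
    have np: "Rch P g (nxsp P g s)" "Suc (Dst P g (nxsp P g s)) = Dst P g s"
      using nxt_prop[OF det Suc.prems False] by auto
    have eq: "(Fsp P g ^^ Suc n) (Some s) = (Fsp P g ^^ n) (Some (nxsp P g s))"
      by (simp add: funpow_Suc_right Fsp_def False del: funpow.simps)
    show ?thesis using Suc.IH[OF np(1)] np(2) unfolding eq by auto
  qed
qed

lemma Fsp_hit: assumes det: "\<forall>s a sg. \<exists>s'. P s a sg = return_pmf s'" and R: "Rch P g s"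
  shows "((Fsp P g ^^ n) (Some s) = Some g) \<longleftrightarrow> n = Dst P g s"
proof (cases "n \<le> Dst P g s")
  case True
  then obtain s' where s': "(Fsp P g ^^ n) (Some s) = Some s'" "Rch P g s'" "Dst P g s' = Dst P g s - n"
    using Fsp_path[OF det R] by blast
  show ?thesis
  proof
    assume "(Fsp P g ^^ n) (Some s) = Some g"
    then have "s' = g" using s' by simp
    then show "n = Dst P g s" using s' True Rch_g[of P g] by simp
  next
    assume "n = Dst P g s"
    then have "s' = g" using s' Dst0 by simp
    then show "(Fsp P g ^^ n) (Some s) = Some g" using s' by simp
  qed
next
  case False
  then show ?thesis using Fsp_path[OF det R, of n] by auto
qed

lemma hte_sp: assumes det: "\<forall>s a sg. \<exists>s'. P s a sg = return_pmf s'" and R: "Rch P g s"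
  shows "hit_time_exp P (polsp P g) s g = of_nat (Dst P g s)"
proof -
  have p: "ennreal (pmf (state_dist P (polsp P g) g (return_pmf s) n) (Some g)) = (if n = Dst P g s then 1 else 0)" for n
    using Fsp_hit[OF det R, of n] by (auto simp: sd_sp[OF det] pmf_return)
  have s1: "(\<Sum>n. ennreal (real n) * (if n = Dst P g s then 1 else 0)) = of_nat (Dst P g s)"
  proof -
    have "(\<Sum>n. ennreal (real n) * (if n = Dst P g s then 1 else 0)) = (\<Sum>n. if n = Dst P g s then ennreal (real n) else 0)"
      by (intro suminf_cong) simp
    also have "\<dots> = ennreal (real (Dst P g s))" using sums_single[of "Dst P g s" "\<lambda>n. ennreal (real n)"] sums_unique by metis
    finally show ?thesis by (simp add: ennreal_of_nat_eq_real_of_nat)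
  qed
  have s2: "(\<Sum>n. (if n = Dst P g s then 1 else 0) :: ennreal) = 1"
    using sums_single[of "Dst P g s" "\<lambda>n. 1 :: ennreal"] sums_unique by metis
  show ?thesis unfolding hit_time_exp_def p s1 s2 by simp
qed

lemma visit_pos: assumes "0 \<le> \<gamma>" "\<gamma> < 1" "z \<in> set_pmf mu"
  shows "visitation P pol g mu \<gamma> z \<noteq> 0"
proof -
  have "(\<Sum>t\<in>{0}. ennreal (\<gamma> ^ t * pmf (state_dist P pol g mu t) (Some z)))
      \<le> (\<Sum>t. ennreal (\<gamma> ^ t * pmf (state_dist P pol g mu t) (Some z)))"
    by (intro sum_le_suminf summ_enn) auto
  moreover have "(\<Sum>t\<in>{0}. ennreal (\<gamma> ^ t * pmf (state_dist P pol g mu t) (Some z))) = ennreal (pmf mu z)"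
    by (simp add: sd_0 pmf_map_inj')
  moreover have "ennreal (pmf mu z) > 0" using assms(3) by (simp add: set_pmf_iff pmf_pos)
  ultimately have "(\<Sum>t. ennreal (\<gamma> ^ t * pmf (state_dist P pol g mu t) (Some z))) \<noteq> 0" by auto
  moreover have "ennreal (1 - \<gamma>) \<noteq> 0" using assms by simp
  ultimately show ?thesis unfolding visitation_def by simp
qed

lemma point_le: "h z \<le> (\<integral>\<^sup>+s. h s \<partial>count_space UNIV)"
proof -
  have "(\<integral>\<^sup>+s. h s * indicator {z} s \<partial>count_space UNIV) = h z"
    using nn_integral_indicator_singleton[of z "count_space UNIV" h] by simp
  moreover have "(\<integral>\<^sup>+s. h s * indicator {z} s \<partial>count_space UNIV) \<le> (\<integral>\<^sup>+s. h s \<partial>count_space UNIV)"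
    by (intro nn_integral_mono) (simp add: indicator_def)
  ultimately show ?thesis by simp
qed

definition Bv :: "('s \<Rightarrow> 'a \<Rightarrow> 's \<Rightarrow> 's pmf) \<Rightarrow> 's \<Rightarrow> 's pmf \<Rightarrow> real \<Rightarrow> ennreal" where
  "Bv P g mu \<gamma> = ennreal (1-\<gamma>) * (\<Sum>t. ennreal (\<gamma>^t) * (\<integral>\<^sup>+z. of_nat (Dst P g z - t) \<partial>measure_pmf mu))"

lemma W_sp: assumes det: "\<forall>s a sg. \<exists>s'. P s a sg = return_pmf s'"
  and "0 \<le> \<gamma>" and allR: "\<forall>z\<in>set_pmf mu. Rch P g z"
  shows "wasserstein_obj P (polsp P g) g mu \<gamma> = Bv P g mu \<gamma>"
proof -
  have "(\<integral>\<^sup>+x. case_option 0 (\<lambda>s. hit_time_exp P (polsp P g) s g) x \<partial>measure_pmf (state_dist P (polsp P g) g mu t))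
      = (\<integral>\<^sup>+z. of_nat (Dst P g z - t) \<partial>measure_pmf mu)" for t
  proof -
    have "(\<integral>\<^sup>+x. case_option 0 (\<lambda>s. hit_time_exp P (polsp P g) s g) x \<partial>measure_pmf (state_dist P (polsp P g) g mu t))
      = (\<integral>\<^sup>+z. case_option 0 (\<lambda>s. hit_time_exp P (polsp P g) s g) ((Fsp P g ^^ t) (Some z)) \<partial>measure_pmf mu)"
      by (simp add: sd_sp[OF det] nn_integral_map_pmf)
    also have "\<dots> = (\<integral>\<^sup>+z. of_nat (Dst P g z - t) \<partial>measure_pmf mu)"
    proof (rule nn_integral_cong_AE, rule AE_pmfI)
      fix z assume "z \<in> set_pmf mu"
      then have R: "Rch P g z" using allR by blast
      show "case_option 0 (\<lambda>s. hit_time_exp P (polsp P g) s g) ((Fsp P g ^^ t) (Some z)) = of_nat (Dst P g z - t)"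
      proof (cases "t \<le> Dst P g z")
        case True
        then obtain s' where s': "(Fsp P g ^^ t) (Some z) = Some s'" "Rch P g s'" "Dst P g s' = Dst P g z - t"
          using Fsp_path[OF det R] by blast
        then show ?thesis using hte_sp[OF det s'(2)] by simp
      next
        case False
        then show ?thesis using Fsp_path[OF det R, of t] by simp
      qed
    qed
    finally show ?thesis .
  qed
  then show ?thesis unfolding wasserstein_obj_def Bv_def visit_expand[OF assms(2)] by simp
qed

lemma W_lower: assumes det: "\<forall>s a sg. \<exists>s'. P s a sg = return_pmf s'"
  and "0 \<le> \<gamma>" and allR: "\<forall>z\<in>set_pmf mu. Rch P g z"
  shows "Bv P g mu \<gamma> \<le> (\<integral>\<^sup>+s. visitation P pol g mu \<gamma> s * Dinf P g s \<partial>count_space UNIV)"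
proof -
  have "(\<integral>\<^sup>+z. of_nat (Dst P g z - t) \<partial>measure_pmf mu)
      \<le> (\<integral>\<^sup>+x. case_option 0 (Dinf P g) x \<partial>measure_pmf (state_dist P pol g mu t))" for t
  proof -
    have "(\<integral>\<^sup>+z. of_nat (Dst P g z - t) \<partial>measure_pmf mu)
       \<le> (\<integral>\<^sup>+z. (\<integral>\<^sup>+x. case_option 0 (Dinf P g) x \<partial>measure_pmf (state_dist P pol g (return_pmf z) t)) \<partial>measure_pmf mu)"
    proof (rule nn_integral_mono_AE, rule AE_pmfI)
      fix z assume "z \<in> set_pmf mu"
      then have R: "Rch P g z" using allR by blast
      have "(of_nat (Dst P g z - t) :: ennreal) = (\<integral>\<^sup>+x. of_nat (Dst P g z - t) \<partial>measure_pmf (state_dist P pol g (return_pmf z) t))"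
        by (simp add: measure_pmf.emeasure_space_1)
      also have "\<dots> \<le> (\<integral>\<^sup>+x. case_option 0 (Dinf P g) x \<partial>measure_pmf (state_dist P pol g (return_pmf z) t))"
      proof (rule nn_integral_mono_AE, rule AE_pmfI)
        fix x assume "x \<in> set_pmf (state_dist P pol g (return_pmf z) t)"
        then have I: "Inv P g z t x" using Inv_sd[OF det] by blast
        show "(of_nat (Dst P g z - t) :: ennreal) \<le> case_option 0 (Dinf P g) x"
        proof (cases x)
          case None
          then show ?thesis using I by (simp add: Inv_def)
        next
          case (Some s)
          show ?thesis
          proof (cases "Rch P g s")
            case True
            then have "Dst P g z \<le> Dst P g s + t" using I Some by (simp add: Inv_def)
            then have "Dst P g z - t \<le> Dst P g s" by linarith
            then show ?thesis using True Some by (simp add: Dinf_def)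
          next
            case False
            then show ?thesis using Some by (simp add: Dinf_def)
          qed
        qed
      qed
      finally show "(of_nat (Dst P g z - t) :: ennreal) \<le> (\<integral>\<^sup>+x. case_option 0 (Dinf P g) x \<partial>measure_pmf (state_dist P pol g (return_pmf z) t))" .
    qed
    also have "\<dots> = (\<integral>\<^sup>+x. case_option 0 (Dinf P g) x \<partial>measure_pmf (state_dist P pol g mu t))"
      by (subst (2) sd_bind) (simp add: nn_integral_bind_pmf)
    finally show ?thesis .
  qed
  then have "(\<Sum>t. ennreal (\<gamma>^t) * (\<integral>\<^sup>+z. of_nat (Dst P g z - t) \<partial>measure_pmf mu))
     \<le> (\<Sum>t. ennreal (\<gamma>^t) * (\<integral>\<^sup>+x. case_option 0 (Dinf P g) x \<partial>measure_pmf (state_dist P pol g mu t)))"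
    by (intro suminf_le summ_enn mult_left_mono) auto
  then show ?thesis unfolding Bv_def visit_expand[OF assms(2)] by (intro mult_left_mono) auto
qed

lemma sd_g: "state_dist P pol g (return_pmf g) (Suc t) = return_pmf None"
proof (induction t)
  case 0
  then show ?case by (simp add: sd_Suc sd_0 map_return_pmf bind_return_pmf gc_step_def)
next
  case (Suc t)
  then show ?case by (simp add: sd_Suc bind_return_pmf gc_step_def)
qed

definition optv :: "('s \<Rightarrow> 'a \<Rightarrow> 's \<Rightarrow> 's pmf) \<Rightarrow> 's \<Rightarrow> real \<Rightarrow> 's \<Rightarrow> ennreal" where
  "optv P g \<gamma> z = (if z = g then 0 else ennreal (\<gamma> ^ (Dst P g z - 1)))"

lemma R_upper: assumes det: "\<forall>s a sg. \<exists>s'. P s a sg = return_pmf s'"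
  and "0 \<le> \<gamma>" "\<gamma> \<le> 1" and R: "Rch P g z"
  shows "(\<Sum>t. ennreal (\<gamma>^t * pmf (state_dist P pol g (return_pmf z) (Suc t)) (Some g))) \<le> optv P g \<gamma> z"
proof (cases "z = g")
  case True
  then show ?thesis by (simp add: sd_g optv_def)
next
  case False
  define k where "k = Dst P g z"
  define p where "p n = pmf (state_dist P pol g (return_pmf z) n) (Some g)" for n
  have k1: "k \<ge> 1" using Dst0[OF R] False unfolding k_def by (cases "Dst P g z") auto
  have tm: "ennreal (\<gamma>^t * p (Suc t)) \<le> ennreal (\<gamma>^(k-1)) * ennreal (p (Suc t))" for t
  proof (cases "p (Suc t) = 0")
    case True then show ?thesis by simp
  next
    case False
    then have "k \<le> Suc t" using hit_pos[OF det, where pol=pol and z=z and n="Suc t"] unfolding p_def k_def by auto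
    then have "\<gamma>^t \<le> \<gamma>^(k-1)" using assms(2,3) by (intro power_decreasing) auto
    then have "\<gamma>^t * p (Suc t) \<le> \<gamma>^(k-1) * p (Suc t)" unfolding p_def by (intro mult_right_mono) auto
    then have "ennreal (\<gamma>^t * p (Suc t)) \<le> ennreal (\<gamma>^(k-1) * p (Suc t))" by (rule ennreal_leI)
    then show ?thesis using assms(2) unfolding p_def by (simp add: ennreal_mult)
  qed
  have sum1: "(\<Sum>t. ennreal (p (Suc t))) \<le> 1"
  proof (rule suminf_le_const[OF summ_enn])
    fix N
    have "(\<Sum>t<N. ennreal (p (Suc t))) \<le> (\<Sum>n<Suc N. ennreal (p n))"
      by (simp only: sum.lessThan_Suc_shift) (simp add: add_increasing)
    also have "\<dots> \<le> (\<Sum>n. ennreal (p n))" by (intro sum_le_suminf summ_enn) auto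
    also have "\<dots> \<le> 1" unfolding p_def by (rule hit_sum_le1)
    finally show "(\<Sum>t<N. ennreal (p (Suc t))) \<le> 1" .
  qed
  have "(\<Sum>t. ennreal (\<gamma>^t * p (Suc t))) \<le> (\<Sum>t. ennreal (\<gamma>^(k-1)) * ennreal (p (Suc t)))"
    by (intro suminf_le summ_enn tm)
  also have "\<dots> = ennreal (\<gamma>^(k-1)) * (\<Sum>t. ennreal (p (Suc t)))" by (rule ennreal_suminf_cmult)
  also have "\<dots> \<le> ennreal (\<gamma>^(k-1)) * 1" using sum1 by (intro mult_left_mono) auto
  finally show ?thesis using False unfolding optv_def p_def k_def by simp
qed

lemma R_lower: assumes R: "Rch P g z"
  and one: "pmf (state_dist P pol g (return_pmf z) (Dst P g z)) (Some g) = 1"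
  shows "optv P g \<gamma> z \<le> (\<Sum>t. ennreal (\<gamma>^t * pmf (state_dist P pol g (return_pmf z) (Suc t)) (Some g)))"
proof (cases "z = g")
  case True
  then show ?thesis by (simp add: optv_def)
next
  case False
  define k where "k = Dst P g z"
  have k1: "k \<ge> 1" using Dst0[OF R] False unfolding k_def by (cases "Dst P g z") auto
  then have sk: "Suc (k - Suc 0) = k" by simp
  have "(\<Sum>t\<in>{k-1}. ennreal (\<gamma>^t * pmf (state_dist P pol g (return_pmf z) (Suc t)) (Some g)))
      \<le> (\<Sum>t. ennreal (\<gamma>^t * pmf (state_dist P pol g (return_pmf z) (Suc t)) (Some g)))"
    by (intro sum_le_suminf summ_enn) auto
  then show ?thesis using False one unfolding optv_def k_def[symmetric] by (simp add: sk)
qed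

lemma ret_nonneg: assumes "0 \<le> \<gamma>" "\<gamma> < 1" shows "0 \<le> expected_return P pol g mu \<gamma>"
proof -
  have sm: "summable (\<lambda>t. \<gamma>^t * pmf (state_dist P pol g mu (Suc t)) (Some g))"
  proof (rule summable_comparison_test[where g="\<lambda>t. \<gamma>^t"])
    show "\<exists>N. \<forall>n\<ge>N. norm (\<gamma>^n * pmf (state_dist P pol g mu (Suc n)) (Some g)) \<le> \<gamma>^n"
      using assms by (auto intro!: exI[of _ 0] mult_left_le pmf_le_1)
    show "summable (\<lambda>t. \<gamma>^t)" using assms by (intro summable_geometric) simp
  qed
  then show ?thesis unfolding expected_return_def using assms by (intro suminf_nonneg) auto
qed

theorem theorem1:
  fixes P :: "'s \<Rightarrow> 'a \<Rightarrow> 's \<Rightarrow> 's pmf"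
    and rho0 :: "'s pmf" and \<gamma> :: real
    and pol :: "'s \<Rightarrow> 's \<Rightarrow> 'a pmf" and g :: 's
  assumes deterministic: "\<forall>s a sg. \<exists>s'. P s a sg = return_pmf s'"
    and "0 \<le> \<gamma>" and "\<gamma> < 1"
    and finite_W: "wasserstein_obj P pol g rho0 \<gamma> \<noteq> \<infinity>"
    and minimizer: "\<forall>pol'. wasserstein_obj P pol g rho0 \<gamma> \<le> wasserstein_obj P pol' g rho0 \<gamma>"
  shows "\<forall>pol'. expected_return P pol' g rho0 \<gamma> \<le> expected_return P pol g rho0 \<gamma>"
proof -
  note det = deterministic
  define f where "f s = hit_time_exp P pol s g" for s
  define vis where "vis s = visitation P pol g rho0 \<gamma> s" for s
  have W: "wasserstein_obj P pol g rho0 \<gamma> = (\<integral>\<^sup>+s. vis s * f s \<partial>count_space UNIV)"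
    unfolding wasserstein_obj_def vis_def f_def ..
  have hge: "Dinf P g s \<le> f s" for s unfolding f_def by (rule hte_ge[OF det])
  have allR: "\<forall>z\<in>set_pmf rho0. Rch P g z"
  proof (rule ccontr)
    assume "\<not> (\<forall>z\<in>set_pmf rho0. Rch P g z)"
    then obtain z where z: "z \<in> set_pmf rho0" "\<not> Rch P g z" by blast
    then have "f z = \<infinity>" using hge[of z] by (simp add: Dinf_def top_unique)
    moreover have "vis z \<noteq> 0" unfolding vis_def using visit_pos[OF assms(2,3) z(1)] .
    ultimately have "vis z * f z = \<infinity>" by (simp add: ennreal_mult_top)
    then have "wasserstein_obj P pol g rho0 \<gamma> = \<infinity>"
      unfolding W using point_le[of "\<lambda>s. vis s * f s" z] by (simp add: top_unique)
    then show False using finite_W by simp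
  qed
  have Wup: "wasserstein_obj P pol g rho0 \<gamma> \<le> Bv P g rho0 \<gamma>"
    using minimizer W_sp[OF det assms(2) allR] by metis
  have Wlow: "Bv P g rho0 \<gamma> \<le> (\<integral>\<^sup>+s. vis s * Dinf P g s \<partial>count_space UNIV)"
    unfolding vis_def by (rule W_lower[OF det assms(2) allR])
  have hit1: "pmf (state_dist P pol g (return_pmf z) (Dst P g z)) (Some g) = 1" if z: "z \<in> set_pmf rho0" for z
  proof -
    have R: "Rch P g z" using allR z by blast
    have "(\<integral>\<^sup>+s. vis s * f s \<partial>count_space UNIV)
        = (\<integral>\<^sup>+s. vis s * Dinf P g s + vis s * (f s - Dinf P g s) \<partial>count_space UNIV)"
      by (intro nn_integral_cong) (simp add: distrib_left[symmetric] add_diff_inverse_ennreal hge)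
    also have "\<dots> = (\<integral>\<^sup>+s. vis s * Dinf P g s \<partial>count_space UNIV) + (\<integral>\<^sup>+s. vis s * (f s - Dinf P g s) \<partial>count_space UNIV)"
      by (rule nn_integral_add) auto
    finally have Weq: "wasserstein_obj P pol g rho0 \<gamma> = (\<integral>\<^sup>+s. vis s * Dinf P g s \<partial>count_space UNIV) + (\<integral>\<^sup>+s. vis s * (f s - Dinf P g s) \<partial>count_space UNIV)"
      unfolding W .
    define c where "c = vis z * (f z - Dinf P g z)"
    have hW: "Bv P g rho0 \<gamma> + c \<le> wasserstein_obj P pol g rho0 \<gamma>"
      unfolding Weq c_def by (intro add_mono Wlow point_le[of "\<lambda>s. vis s * (f s - Dinf P g s)"])
    then have le: "Bv P g rho0 \<gamma> + c \<le> Bv P g rho0 \<gamma> + 0" using Wup by (metis add.right_neutral order.trans)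
    have "Bv P g rho0 \<gamma> \<le> Bv P g rho0 \<gamma> + c" by (rule add_increasing2) auto
    then have "Bv P g rho0 \<gamma> \<le> wasserstein_obj P pol g rho0 \<gamma>" using hW by (rule order.trans)
    then have "Bv P g rho0 \<gamma> \<noteq> \<infinity>" using finite_W by (auto simp: top_unique)
    then have "c = 0" using le by (simp add: ennreal_add_left_cancel_le)
    moreover have "vis z \<noteq> 0" unfolding vis_def using visit_pos[OF assms(2,3) z] .
    ultimately have "f z - Dinf P g z = 0" unfolding c_def by simp
    then have "f z \<le> Dinf P g z" by (rule ennreal_minus_eq_0)
    then have "hit_time_exp P pol z g \<le> of_nat (Dst P g z)" using R unfolding f_def Dinf_def by simp
    then show ?thesis by (rule hte_eq[OF det R])
  qed
  show ?thesis
  proof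
    fix pol'
    have "ennreal (expected_return P pol' g rho0 \<gamma>)
        = (\<integral>\<^sup>+z. (\<Sum>t. ennreal (\<gamma>^t * pmf (state_dist P pol' g (return_pmf z) (Suc t)) (Some g))) \<partial>measure_pmf rho0)"
      by (rule ret_expand[OF assms(2,3)])
    also have "\<dots> \<le> (\<integral>\<^sup>+z. optv P g \<gamma> z \<partial>measure_pmf rho0)"
    proof (rule nn_integral_mono_AE, rule AE_pmfI)
      fix z assume "z \<in> set_pmf rho0"
      then show "(\<Sum>t. ennreal (\<gamma>^t * pmf (state_dist P pol' g (return_pmf z) (Suc t)) (Some g))) \<le> optv P g \<gamma> z"
        using allR assms(2,3) by (intro R_upper[OF det]) auto
    qed
    also have "\<dots> \<le> (\<integral>\<^sup>+z. (\<Sum>t. ennreal (\<gamma>^t * pmf (state_dist P pol g (return_pmf z) (Suc t)) (Some g))) \<partial>measure_pmf rho0)"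
    proof (rule nn_integral_mono_AE, rule AE_pmfI)
      fix z assume z: "z \<in> set_pmf rho0"
      then show "optv P g \<gamma> z \<le> (\<Sum>t. ennreal (\<gamma>^t * pmf (state_dist P pol g (return_pmf z) (Suc t)) (Some g)))"
        using allR hit1[OF z] by (intro R_lower) auto
    qed
    also have "\<dots> = ennreal (expected_return P pol g rho0 \<gamma>)"
      by (rule ret_expand[OF assms(2,3), symmetric])
    finally have "ennreal (expected_return P pol' g rho0 \<gamma>) \<le> ennreal (expected_return P pol g rho0 \<gamma>)" .
    then show "expected_return P pol' g rho0 \<gamma> \<le> expected_return P pol g rho0 \<gamma>"
      using ennreal_le_iff[OF ret_nonneg[OF assms(2,3), of P pol g rho0]] by blast
  qed
qed

end
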